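(* There is an absolute constant $C>0$ such that the following holds. Let $G=(n,s,\{u^p_i\})$ be an anonymous game with $n\ge 2$ players and $s\ge 2$ strategies, with utilities in $[0,1]$, and let $\lambda>0$ be such that $|u^p_i(x)-u^p_i(y)|\le \lambda\|x-y\|_1$ for all $p\in[n]$, $i\in[s]$ and $x,y\in\Pi^s_{n-1}$. Then $G$ has an $\epsilon$-approximate pure Nash equilibrium with $\epsilon = C s^2\lambda$.
   Context: An anonymous game $G=(n,s,\{u^p_i\})$ consists of players $[n]=\{1,\dots,n\}$, strategies $[s]=\{1,\dots,s\}$, and for each $p\in[n]$, $i\in[s]$ a utility function $u^p_i:\Pi^s_{n-1}\to[0,1]$, where $\Pi^s_{n-1}=\{(x_1,\dots,x_s)\in\mathbb{Z}_{\ge 0}^s:\sum_i x_i=n-1\}$; $u^p_i(x)$ is the utility of player $p$ playing strategy $i$ when, for each $\ell$, exactly $x_\ell$ of the other $n-1$ players play strategy $\ell$. A pure strategy profile is a map $S:[n]\to[s]$; for $p\in[n]$, $x[S,p]\in\Pi^s_{n-1}$ is the vector whose $\ell$-th entry is the number of $q\in[n]\setminus\{p\}$ with $S(q)=\ell$. $S$ is an $\epsilon$-approximate pure Nash equilibrium if for all $p\in[n]$ and all $i\in[s]$, $u^p_{S(p)}(x[S,p])+\epsilon\ge u^p_i(x[S,p])$. *)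

theory Defs
  imports "HOL-Analysis.Analysis"
begin

text \<open>Players are 1..n, strategies are 1..s. A count vector is a function
  nat => nat supported on {1..s}. u p i x is the utility of player p playing i.\<close>

definition Pi_set :: "nat \<Rightarrow> nat \<Rightarrow> (nat \<Rightarrow> nat) set" where
  "Pi_set s m = {x. (\<forall>i. i \<notin> {1..s} \<longrightarrow> x i = 0) \<and> (\<Sum>i=1..s. x i) = m}"

definition l1_dist :: "nat \<Rightarrow> (nat \<Rightarrow> nat) \<Rightarrow> (nat \<Rightarrow> nat) \<Rightarrow> real" where
  "l1_dist s x y = (\<Sum>i=1..s. \<bar>real (x i) - real (y i)\<bar>)"

definition anonymous_game ::
  "nat \<Rightarrow> nat \<Rightarrow> (nat \<Rightarrow> nat \<Rightarrow> (nat \<Rightarrow> nat) \<Rightarrow> real) \<Rightarrow> bool" where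
  "anonymous_game n s u \<longleftrightarrow>
     (\<forall>p\<in>{1..n}. \<forall>i\<in>{1..s}. \<forall>x\<in>Pi_set s (n - 1). 0 \<le> u p i x \<and> u p i x \<le> 1)"

definition lipschitz_game ::
  "nat \<Rightarrow> nat \<Rightarrow> (nat \<Rightarrow> nat \<Rightarrow> (nat \<Rightarrow> nat) \<Rightarrow> real) \<Rightarrow> real \<Rightarrow> bool" where
  "lipschitz_game n s u lambda \<longleftrightarrow>
     (\<forall>p\<in>{1..n}. \<forall>i\<in>{1..s}. \<forall>x\<in>Pi_set s (n - 1). \<forall>y\<in>Pi_set s (n - 1).
        \<bar>u p i x - u p i y\<bar> \<le> lambda * l1_dist s x y)"

definition pure_profile :: "nat \<Rightarrow> nat \<Rightarrow> (nat \<Rightarrow> nat) \<Rightarrow> bool" where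
  "pure_profile n s S \<longleftrightarrow> (\<forall>p\<in>{1..n}. S p \<in> {1..s})"

definition others_count :: "nat \<Rightarrow> nat \<Rightarrow> (nat \<Rightarrow> nat) \<Rightarrow> nat \<Rightarrow> (nat \<Rightarrow> nat)" where
  "others_count n s S p = (\<lambda>l. if l \<in> {1..s} then card {q \<in> {1..n} - {p}. S q = l} else 0)"

definition approx_pure_NE ::
  "nat \<Rightarrow> nat \<Rightarrow> (nat \<Rightarrow> nat \<Rightarrow> (nat \<Rightarrow> nat) \<Rightarrow> real) \<Rightarrow> real \<Rightarrow> (nat \<Rightarrow> nat) \<Rightarrow> bool" where
  "approx_pure_NE n s u \<epsilon> S \<longleftrightarrow> pure_profile n s S \<and>
     (\<forall>p\<in>{1..n}. \<forall>i\<in>{1..s}.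
        u p (S p) (others_count n s S p) + \<epsilon> \<ge> u p i (others_count n s S p))"

end

theory Submission
  imports Defs
begin


lemma hall_cap:
  fixes N :: "'a set" and c :: "'b \<Rightarrow> nat"
  assumes "finite N" and "\<forall>p\<in>N. finite (A p)"
    and "\<forall>T\<subseteq>N. card T \<le> (\<Sum>j\<in>\<Union>(A ` T). c j)"
  shows "\<exists>S. (\<forall>p\<in>N. S p \<in> A p) \<and> (\<forall>j. card {p\<in>N. S p = j} \<le> c j)"
  using assms
proof (induction "\<Sum>p\<in>N. card (A p)" arbitrary: A rule: less_induct)
  case less
  note fin = less.prems(1) and finA = less.prems(2) and hall = less.prems(3)
  have ne: "A p \<noteq> {}" if "p \<in> N" for p
  proof
    assume "A p = {}"
    with hall[rule_format, of "{p}"] that show False by simp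
  qed
  show ?case
  proof (cases "\<exists>p\<in>N. 2 \<le> card (A p)")
    case False
    have c1: "card (A p) = 1" if "p \<in> N" for p
    proof -
      have "card (A p) > 0" using ne[OF that] finA that by (simp add: card_gt_0_iff)
      moreover have "\<not> 2 \<le> card (A p)" using False that by blast
      ultimately show ?thesis by linarith
    qed
    define S where "S p = (THE j. A p = {j})" for p
    have AS: "A p = {S p}" if pN': "p \<in> N" for p
    proof -
      obtain j where "A p = {j}" using c1[OF pN'] card_1_singletonE by blast
      then show ?thesis unfolding S_def by simp
    qed
    show ?thesis
    proof (intro exI conjI ballI allI)
      fix p assume "p \<in> N" then show "S p \<in> A p" using AS by auto
    next
      fix j
      let ?T = "{p\<in>N. S p = j}"
      have "\<Union>(A ` ?T) \<subseteq> {j}" using AS by auto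
      then have "(\<Sum>j\<in>\<Union>(A ` ?T). c j) \<le> (\<Sum>j\<in>{j}. c j)"
        by (intro sum_mono2) auto
      then show "card ?T \<le> c j" using hall[rule_format, of ?T] by auto
    qed
  next
    case True
    then obtain p where pN: "p \<in> N" and c2: "2 \<le> card (A p)" by blast
    have "\<not> (\<forall>x\<in>A p. \<forall>y\<in>A p. x = y)"
      using c2 card_le_Suc0_iff_eq[OF finA[rule_format, OF pN]] by auto
    then obtain j1 j2 where j: "j1 \<in> A p" "j2 \<in> A p" "j1 \<noteq> j2" by blast
    define A1 where "A1 = A(p := A p - {j1})"
    define A2 where "A2 = A(p := A p - {j2})"
    have meas: "(\<Sum>q\<in>N. card (B q)) < (\<Sum>q\<in>N. card (A q))"
      if "B = A(p := A p - {j})" "j \<in> A p" for B j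
    proof -
      have "(\<Sum>q\<in>N. card (B q)) = card (B p) + (\<Sum>q\<in>N-{p}. card (B q))"
        using fin pN by (simp add: sum.remove)
      also have "\<dots> = card (A p) - 1 + (\<Sum>q\<in>N-{p}. card (A q))"
        using that finA pN by auto
      also have "\<dots> < card (A p) + (\<Sum>q\<in>N-{p}. card (A q))"
        using c2 by auto
      also have "\<dots> = (\<Sum>q\<in>N. card (A q))"
        using fin pN by (simp add: sum.remove)
      finally show ?thesis .
    qed
    have finB: "\<forall>q\<in>N. finite (B q)" if "B = A(p := A p - {j})" for B j
      using finA that by auto
    have good: "\<exists>S. (\<forall>q\<in>N. S q \<in> A q) \<and> (\<forall>j. card {q\<in>N. S q = j} \<le> c j)"
      if gB: "B = A(p := A p - {j})" "j \<in> A p" "\<forall>T\<subseteq>N. card T \<le> (\<Sum>j\<in>\<Union>(B ` T). c j)" for B j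
    proof -
      obtain S where S: "\<forall>q\<in>N. S q \<in> B q" "\<forall>j. card {q\<in>N. S q = j} \<le> c j"
        using less.hyps[OF meas[OF gB(1,2)] fin finB[OF gB(1)] gB(3)] by blast
      have "\<forall>q\<in>N. S q \<in> A q" using S(1) gB(1) by (auto split: if_splits)
      with S(2) show ?thesis by blast
    qed
    show ?thesis
    proof (rule ccontr)
      assume nt: "\<not> ?thesis"
      have "\<not> (\<forall>T\<subseteq>N. card T \<le> (\<Sum>j\<in>\<Union>(A1 ` T). c j))"
        using good[OF A1_def j(1)] nt by blast
      then obtain T1 where T1: "T1 \<subseteq> N" "\<not> card T1 \<le> (\<Sum>j\<in>\<Union>(A1 ` T1). c j)" by blast
      have "\<not> (\<forall>T\<subseteq>N. card T \<le> (\<Sum>j\<in>\<Union>(A2 ` T). c j))"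
        using good[OF A2_def j(2)] nt by blast
      then obtain T2 where T2: "T2 \<subseteq> N" "\<not> card T2 \<le> (\<Sum>j\<in>\<Union>(A2 ` T2). c j)" by blast
      have pT1: "p \<in> T1"
      proof (rule ccontr)
        assume "p \<notin> T1"
        then have "A1 ` T1 = A ` T1" unfolding A1_def by auto
        with T1 hall show False by auto
      qed
      have pT2: "p \<in> T2"
      proof (rule ccontr)
        assume "p \<notin> T2"
        then have "A2 ` T2 = A ` T2" unfolding A2_def by auto
        with T2 hall show False by auto
      qed
      define X1 where "X1 = \<Union>(A1 ` T1)"
      define X2 where "X2 = \<Union>(A2 ` T2)"
      have finT1: "finite T1" "finite T2" using T1 T2 fin finite_subset by auto
      have finX: "finite X1" "finite X2" unfolding X1_def X2_def A1_def A2_def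
        using finT1 finA T1(1) T2(1) by (auto intro!: finite_Union)
      have U: "\<Union>(A ` (T1 \<union> T2)) \<subseteq> X1 \<union> X2"
      proof
        fix j assume "j \<in> \<Union>(A ` (T1 \<union> T2))"
        then obtain q where q: "q \<in> T1 \<union> T2" "j \<in> A q" by blast
        show "j \<in> X1 \<union> X2"
        proof (cases "q = p")
          case True
          then show ?thesis using q j pT1 pT2 unfolding X1_def X2_def A1_def A2_def
            by (cases "j = j1") auto
        next
          case False
          then show ?thesis using q unfolding X1_def X2_def A1_def A2_def by auto
        qed
      qed
      have I: "\<Union>(A ` ((T1 - {p}) \<inter> (T2 - {p}))) \<subseteq> X1 \<inter> X2"
        unfolding X1_def X2_def A1_def A2_def by auto
      have h1: "card (T1 \<union> T2) \<le> (\<Sum>j\<in>X1 \<union> X2. c j)"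
      proof -
        have "card (T1 \<union> T2) \<le> (\<Sum>j\<in>\<Union>(A ` (T1 \<union> T2)). c j)"
          using hall[rule_format, of "T1 \<union> T2"] T1(1) T2(1) by blast
        also have "\<dots> \<le> (\<Sum>j\<in>X1 \<union> X2. c j)"
          using U finX by (intro sum_mono2) auto
        finally show ?thesis .
      qed
      have h2: "card ((T1 - {p}) \<inter> (T2 - {p})) \<le> (\<Sum>j\<in>X1 \<inter> X2. c j)"
      proof -
        have "card ((T1 - {p}) \<inter> (T2 - {p})) \<le> (\<Sum>j\<in>\<Union>(A ` ((T1 - {p}) \<inter> (T2 - {p}))). c j)"
          using hall T1(1) by (meson Diff_subset inf.coboundedI1 order_trans)
        also have "\<dots> \<le> (\<Sum>j\<in>X1 \<inter> X2. c j)"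
          using I finX by (intro sum_mono2) auto
        finally show ?thesis .
      qed
      have su: "(\<Sum>j\<in>X1 \<union> X2. c j) + (\<Sum>j\<in>X1 \<inter> X2. c j) = (\<Sum>j\<in>X1. c j) + (\<Sum>j\<in>X2. c j)"
        using finX by (rule sum.union_inter)
      have "(T1 - {p}) \<inter> (T2 - {p}) = (T1 \<inter> T2) - {p}" by auto
      then have ci: "card ((T1 - {p}) \<inter> (T2 - {p})) = card (T1 \<inter> T2) - 1"
        using pT1 pT2 finT1 by auto
      have cu: "card (T1 \<union> T2) + card (T1 \<inter> T2) = card T1 + card T2"
        using finT1 by (rule card_Un_Int[symmetric])
      have "T1 \<inter> T2 \<noteq> {}" using pT1 pT2 by blast
      then have "card (T1 \<inter> T2) \<ge> 1" using finT1
        by (simp add: Suc_leI card_gt_0_iff)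
      then show False using h1 h2 su ci cu T1(2) T2(2) unfolding X1_def X2_def by linarith
    qed
  qed
qed



locale G =
  fixes n s :: nat and u :: "nat \<Rightarrow> nat \<Rightarrow> (nat \<Rightarrow> nat) \<Rightarrow> real" and lam :: real
  assumes n2: "n \<ge> 2" and s2: "s \<ge> 2" and lam: "lam > 0"
    and ag: "anonymous_game n s u" and lg: "lipschitz_game n s u lam"
begin

definition D :: "(nat \<Rightarrow> real) \<Rightarrow> (nat \<Rightarrow> real) \<Rightarrow> real" where
  "D y z = (\<Sum>i=1..s. \<bar>y i - z i\<bar>)"
definition rv :: "(nat \<Rightarrow> nat) \<Rightarrow> nat \<Rightarrow> real" where
  "rv x = (\<lambda>i. real (x i))"
definition E :: "nat \<Rightarrow> nat \<Rightarrow> (nat \<Rightarrow> real) \<Rightarrow> real" where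
  "E p j y = Inf ((\<lambda>x. u p j x + lam * D y (rv x)) ` Pi_set s (n-1))"
definition M :: "nat \<Rightarrow> (nat \<Rightarrow> real) \<Rightarrow> real" where
  "M p y = Max ((\<lambda>j. E p j y) ` {1..s})"
definition h :: "nat \<Rightarrow> nat \<Rightarrow> (nat \<Rightarrow> real) \<Rightarrow> real" where
  "h p j y = max 0 (E p j y - M p y + lam)"
definition H :: "nat \<Rightarrow> (nat \<Rightarrow> real) \<Rightarrow> real" where
  "H p y = (\<Sum>j=1..s. h p j y)"
definition sg :: "nat \<Rightarrow> nat \<Rightarrow> (nat \<Rightarrow> real) \<Rightarrow> real" where
  "sg p j y = h p j y / H p y"
definition F :: "nat \<Rightarrow> (nat \<Rightarrow> real) \<Rightarrow> real" where
  "F j y = (\<Sum>p=1..n. sg p j y)"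

lemma D_nonneg: "D y z \<ge> 0" unfolding D_def by (simp add: sum_nonneg)
lemma D_sym: "D y z = D z y" unfolding D_def by (simp add: abs_minus_commute)
lemma D_self: "D y y = 0" unfolding D_def by simp
lemma D_tri: "D y z \<le> D y w + D w z"
  unfolding D_def sum.distrib[symmetric] by (intro sum_mono) linarith

lemma Pi_ne: "(\<lambda>i. if i = 1 then n - 1 else 0) \<in> Pi_set s (n-1)"
proof -
  have "1 \<in> {1..s}" using s2 by auto
  then show ?thesis unfolding Pi_set_def by (auto simp: sum.delta)
qed

lemma E_bdd:
  assumes "p \<in> {1..n}" "j \<in> {1..s}"
  shows "bdd_below ((\<lambda>x. u p j x + lam * D y (rv x)) ` Pi_set s (n-1))"
proof (rule bdd_belowI[of _ 0])
  fix t assume "t \<in> (\<lambda>x. u p j x + lam * D y (rv x)) ` Pi_set s (n-1)"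
  then obtain x where x: "x \<in> Pi_set s (n-1)" "t = u p j x + lam * D y (rv x)" by auto
  have "0 \<le> u p j x" using ag assms x(1) unfolding anonymous_game_def by auto
  moreover have "0 \<le> lam * D y (rv x)" using lam D_nonneg by simp
  ultimately show "0 \<le> t" using x(2) by simp
qed

lemma E_le:
  assumes "p \<in> {1..n}" "j \<in> {1..s}" "x \<in> Pi_set s (n-1)"
  shows "E p j y \<le> u p j x + lam * D y (rv x)"
  unfolding E_def by (rule cInf_lower[OF _ E_bdd[OF assms(1,2)]]) (use assms(3) in auto)

lemma E_lip:
  assumes "p \<in> {1..n}" "j \<in> {1..s}"
  shows "E p j y \<le> E p j y' + lam * D y y'"
proof -
  have "E p j y - lam * D y y' \<le> E p j y'"
    unfolding E_def[of p j y']
  proof (rule cInf_greatest)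
    show "(\<lambda>x. u p j x + lam * D y' (rv x)) ` Pi_set s (n-1) \<noteq> {}" using Pi_ne by auto
  next
    fix t assume "t \<in> (\<lambda>x. u p j x + lam * D y' (rv x)) ` Pi_set s (n-1)"
    then obtain x where x: "x \<in> Pi_set s (n-1)" "t = u p j x + lam * D y' (rv x)" by auto
    have "E p j y \<le> u p j x + lam * D y (rv x)" by (rule E_le[OF assms x(1)])
    also have "\<dots> \<le> u p j x + lam * (D y y' + D y' (rv x))"
      using D_tri[of y "rv x" y'] lam by (simp add: mult_left_mono)
    finally show "E p j y - lam * D y y' \<le> t" using x(2) by (simp add: algebra_simps)
  qed
  then show ?thesis by simp
qed

lemma E_lip_abs:
  assumes "p \<in> {1..n}" "j \<in> {1..s}"
  shows "\<bar>E p j y - E p j y'\<bar> \<le> lam * D y y'"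
proof -
  have "E p j y' \<le> E p j y + lam * D y y'" using E_lip[OF assms, of y' y] D_sym[of y' y] by simp
  then show ?thesis using E_lip[OF assms, of y y'] by (simp add: abs_le_iff)
qed

lemma D_rv: "D (rv x) (rv x') = l1_dist s x x'"
  unfolding D_def rv_def l1_dist_def by simp

lemma E_int:
  assumes "p \<in> {1..n}" "j \<in> {1..s}" "x \<in> Pi_set s (n-1)"
  shows "E p j (rv x) = u p j x"
proof (rule antisym)
  show "E p j (rv x) \<le> u p j x" using E_le[OF assms, of "rv x"] D_self by simp
next
  show "u p j x \<le> E p j (rv x)"
    unfolding E_def
  proof (rule cInf_greatest)
    show "(\<lambda>x'. u p j x' + lam * D (rv x) (rv x')) ` Pi_set s (n-1) \<noteq> {}" using Pi_ne by auto
  next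
    fix t assume "t \<in> (\<lambda>x'. u p j x' + lam * D (rv x) (rv x')) ` Pi_set s (n-1)"
    then obtain x' where x': "x' \<in> Pi_set s (n-1)" "t = u p j x' + lam * D (rv x) (rv x')" by auto
    have "\<bar>u p j x - u p j x'\<bar> \<le> lam * l1_dist s x x'"
      using lg assms x'(1) unfolding lipschitz_game_def by blast
    then show "u p j x \<le> t" using x'(2) D_rv by simp
  qed
qed

lemma M_ge: "j \<in> {1..s} \<Longrightarrow> E p j y \<le> M p y"
  unfolding M_def by (rule Max_ge) auto

lemma M_ex: "\<exists>j\<in>{1..s}. E p j y = M p y"
proof -
  have "M p y \<in> (\<lambda>j. E p j y) ` {1..s}" unfolding M_def using s2 by (intro Max_in) auto
  then show ?thesis by auto
qed

lemma M_lip: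
  assumes "p \<in> {1..n}"
  shows "M p y \<le> M p y' + lam * D y y'"
proof -
  obtain j where j: "j \<in> {1..s}" "E p j y = M p y" using M_ex by blast
  have "E p j y \<le> E p j y' + lam * D y y'" by (rule E_lip[OF assms j(1)])
  also have "\<dots> \<le> M p y' + lam * D y y'" using M_ge[OF j(1)] by simp
  finally show ?thesis using j(2) by simp
qed

lemma M_lip_abs:
  assumes "p \<in> {1..n}"
  shows "\<bar>M p y - M p y'\<bar> \<le> lam * D y y'"
proof -
  have "M p y' \<le> M p y + lam * D y y'" using M_lip[OF assms, of y' y] D_sym[of y' y] by simp
  then show ?thesis using M_lip[OF assms, of y y'] by (simp add: abs_le_iff)
qed

lemma h_nonneg: "h p j y \<ge> 0" unfolding h_def by simp

lemma H_ge: "H p y \<ge> lam"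
proof -
  obtain j where j: "j \<in> {1..s}" "E p j y = M p y" using M_ex by blast
  have "h p j y = lam" unfolding h_def using j(2) lam by simp
  moreover have "h p j y \<le> H p y" unfolding H_def
    by (rule member_le_sum) (use j(1) h_nonneg in auto)
  ultimately show ?thesis by simp
qed

lemma H_pos: "H p y > 0" using H_ge[of p y] lam by simp

lemma h_le_H: "j \<in> {1..s} \<Longrightarrow> h p j y \<le> H p y"
  unfolding H_def by (rule member_le_sum) (use h_nonneg in auto)

lemma sg_nonneg: "sg p j y \<ge> 0" unfolding sg_def using h_nonneg H_pos[of p y]
  by (simp add: divide_nonneg_nonneg less_imp_le)

lemma sg_le1: "j \<in> {1..s} \<Longrightarrow> sg p j y \<le> 1"
  unfolding sg_def using h_le_H H_pos by simp

lemma sg_sum: "(\<Sum>j=1..s. sg p j y) = 1"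
  unfolding sg_def sum_divide_distrib[symmetric] H_def[symmetric] using H_pos[of p y] by simp

lemma sg_pos_best:
  assumes "sg p j y > 0"
  shows "E p j y > M p y - lam"
proof -
  have "h p j y > 0" using assms H_pos[of p y] unfolding sg_def by (simp add: zero_less_divide_iff)
  then show ?thesis unfolding h_def by simp
qed

lemma ratio_lip:
  fixes a a' b b' d e1 e2 :: real
  assumes "b \<ge> d" "b' \<ge> d" "d > 0" "0 \<le> a'" "a' \<le> b'" "\<bar>a - a'\<bar> \<le> e1" "\<bar>b - b'\<bar> \<le> e2"
  shows "\<bar>a / b - a' / b'\<bar> \<le> (e1 + e2) / d"
proof -
  have bp: "b > 0" "b' > 0" using assms by auto
  have eq: "a / b - a' / b' = (a - a') / b + (a' / b') * ((b' - b) / b)"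
    using bp by (simp add: field_simps)
  have "\<bar>(a - a') / b\<bar> \<le> e1 / d"
    using bp assms by (simp add: abs_divide frac_le)
  moreover have "\<bar>(a' / b') * ((b' - b) / b)\<bar> \<le> e2 / d"
  proof -
    have "\<bar>a' / b'\<bar> \<le> 1" using assms bp by simp
    moreover have "\<bar>(b' - b) / b\<bar> \<le> e2 / d"
      using bp assms by (simp add: abs_divide frac_le abs_minus_commute)
    ultimately have "\<bar>a' / b'\<bar> * \<bar>(b' - b) / b\<bar> \<le> 1 * (e2 / d)"
      by (intro mult_mono) auto
    then show ?thesis by (simp add: abs_mult)
  qed
  moreover have "\<bar>a / b - a' / b'\<bar> \<le> \<bar>(a - a') / b\<bar> + \<bar>(a' / b') * ((b' - b) / b)\<bar>"
    unfolding eq by (rule abs_triangle_ineq)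
  moreover have "(e1 + e2) / d = e1 / d + e2 / d" by (simp add: add_divide_distrib)
  ultimately show ?thesis by linarith
qed

lemma max0_lip: "\<bar>max 0 a - max 0 b\<bar> \<le> \<bar>(a::real) - b\<bar>"
  by (cases "a \<le> 0"; cases "b \<le> 0") (auto simp: max_def)

lemma h_lip:
  assumes "p \<in> {1..n}" "j \<in> {1..s}"
  shows "\<bar>h p j y - h p j y'\<bar> \<le> 2 * lam * D y y'"
proof -
  have "\<bar>max 0 (E p j y - M p y + lam) - max 0 (E p j y' - M p y' + lam)\<bar>
        \<le> \<bar>(E p j y - M p y + lam) - (E p j y' - M p y' + lam)\<bar>"
    by (rule max0_lip)
  also have "\<dots> \<le> 2 * lam * D y y'"
    using E_lip_abs[OF assms, of y y'] M_lip_abs[OF assms(1), of y y'] by linarith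
  finally show ?thesis unfolding h_def .
qed

lemma H_lip:
  assumes "p \<in> {1..n}"
  shows "\<bar>H p y - H p y'\<bar> \<le> real s * (2 * lam * D y y')"
proof -
  have "\<bar>H p y - H p y'\<bar> = \<bar>\<Sum>j=1..s. h p j y - h p j y'\<bar>"
    unfolding H_def by (simp add: sum_subtractf)
  also have "\<dots> \<le> (\<Sum>j=1..s. \<bar>h p j y - h p j y'\<bar>)" by (rule sum_abs)
  also have "\<dots> \<le> (\<Sum>j=1..s. 2 * lam * D y y')"
    by (rule sum_mono) (use h_lip[OF assms] in auto)
  finally show ?thesis by simp
qed

lemma sg_lip:
  assumes "p \<in> {1..n}" "j \<in> {1..s}"
  shows "\<bar>sg p j y - sg p j y'\<bar> \<le> 2 * (real s + 1) * D y y'"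
proof -
  have "\<bar>sg p j y - sg p j y'\<bar> \<le> (2 * lam * D y y' + real s * (2 * lam * D y y')) / lam"
    unfolding sg_def
    by (rule ratio_lip[OF H_ge H_ge lam h_nonneg h_le_H[OF assms(2)] h_lip[OF assms] H_lip[OF assms(1)]])
  also have "\<dots> = 2 * (real s + 1) * D y y'" using lam by (simp add: field_simps)
  finally show ?thesis .
qed

lemma F_lip:
  assumes "j \<in> {1..s}"
  shows "\<bar>F j y - F j y'\<bar> \<le> 2 * real n * (real s + 1) * D y y'"
proof -
  have "\<bar>F j y - F j y'\<bar> = \<bar>\<Sum>p=1..n. sg p j y - sg p j y'\<bar>"
    unfolding F_def by (simp add: sum_subtractf)
  also have "\<dots> \<le> (\<Sum>p=1..n. \<bar>sg p j y - sg p j y'\<bar>)" by (rule sum_abs)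
  also have "\<dots> \<le> (\<Sum>p=1..n. 2 * (real s + 1) * D y y')"
    by (rule sum_mono) (use sg_lip assms in auto)
  finally show ?thesis by (simp add: algebra_simps)
qed

lemma F_nonneg: "F j y \<ge> 0" unfolding F_def by (simp add: sum_nonneg sg_nonneg)

lemma F_le: "j \<in> {1..s} \<Longrightarrow> F j y \<le> real n"
proof -
  assume j: "j \<in> {1..s}"
  have "F j y \<le> (\<Sum>p=1..n. 1)" unfolding F_def by (rule sum_mono) (use sg_le1 j in auto)
  then show ?thesis by simp
qed

lemma F_sum: "(\<Sum>j=1..s. F j y) = real n"
  unfolding F_def by (subst sum.swap) (simp only: sg_sum, simp)

end


context G begin

definition K :: nat where "K = 2 * n * (s + 1) * s"
definition P :: nat where "P = n * K"
definition pt :: "(nat \<Rightarrow> nat) \<Rightarrow> nat \<Rightarrow> real" where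
  "pt c = (\<lambda>i. real (c (i - 1)) / real K)"

lemma K_pos: "K > 0" unfolding K_def using n2 s2 by simp
lemma P_pos: "P > 0" unfolding P_def using n2 K_pos by simp

lemma D_cell:
  assumes "\<forall>j<s. q j \<le> r j \<and> r j \<le> q j + 1"
  shows "D (pt r) (pt q) \<le> real s / real K"
proof -
  have "D (pt r) (pt q) = (\<Sum>i=1..s. \<bar>real (r (i - 1)) - real (q (i - 1))\<bar> / real K)"
    unfolding D_def pt_def using K_pos by (simp add: diff_divide_distrib[symmetric] abs_divide)
  also have "\<dots> \<le> (\<Sum>i=1..s. 1 / real K)"
  proof (rule sum_mono)
    fix i assume "i \<in> {1..s}"
    then have "i - 1 < s" by auto
    then have "\<bar>real (r (i - 1)) - real (q (i - 1))\<bar> \<le> 1" using assms by force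
    then show "\<bar>real (r (i - 1)) - real (q (i - 1))\<bar> / real K \<le> 1 / real K"
      using K_pos by (simp add: divide_right_mono)
  qed
  also have "\<dots> = real s / real K" by simp
  finally show ?thesis .
qed

lemma F_cell:
  assumes "\<forall>j<s. q j \<le> r j \<and> r j \<le> q j + 1" "j \<in> {1..s}"
  shows "\<bar>F j (pt r) - F j (pt q)\<bar> \<le> 1"
proof -
  have "\<bar>F j (pt r) - F j (pt q)\<bar> \<le> 2 * real n * (real s + 1) * D (pt r) (pt q)"
    by (rule F_lip[OF assms(2)])
  also have "\<dots> \<le> 2 * real n * (real s + 1) * (real s / real K)"
    by (rule mult_left_mono[OF D_cell[OF assms(1)]]) simp
  also have "\<dots> = 1"
  proof -
    have pos: "0 < real n * (real s * 2) + real n * (real s * (real s * 2))"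
      using n2 s2 by (intro add_pos_pos mult_pos_pos) auto
    show ?thesis unfolding K_def using pos by (simp add: field_simps)
  qed
  finally show ?thesis .
qed

lemma approx_fp: "\<exists>x. \<forall>j\<in>{1..s}. \<bar>F j x - x j\<bar> \<le> 2"
proof -
  define lab where "lab c i = (if c i < P \<and> real (c i) \<le> real K * F (Suc i) (pt c) then (0::nat) else 1)"
    for c i
  have a2: "\<forall>x. (\<forall>i<s. x i \<le> P) \<longrightarrow> (\<forall>i<s. lab x i = 0 \<or> lab x i = 1)"
    by (simp add: lab_def)
  have a3: "\<forall>x. (\<forall>i<s. x i \<le> P) \<longrightarrow> (\<forall>i<s. x i = 0 \<longrightarrow> lab x i = 0)"
    using P_pos F_nonneg by (simp add: lab_def)
  have a4: "\<forall>x. (\<forall>i<s. x i \<le> P) \<longrightarrow> (\<forall>i<s. x i = P \<longrightarrow> lab x i = 1)"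
    by (simp add: lab_def)
  obtain q where q: "\<forall>i<s. q i < P"
    and cell: "\<forall>i<s. \<exists>r t. (\<forall>j<s. q j \<le> r j \<and> r j \<le> q j + 1) \<and>
        (\<forall>j<s. q j \<le> t j \<and> t j \<le> q j + 1) \<and> lab r i \<noteq> lab t i"
    using kuhn_lemma[of P s lab, OF P_pos a2 a3 a4] by blast
  have "\<bar>F j (pt q) - pt q j\<bar> \<le> 2" if j: "j \<in> {1..s}" for j
  proof -
    define i where "i = j - 1"
    have i: "i < s" "Suc i = j" using j unfolding i_def by auto
    obtain r t where r: "\<forall>j<s. q j \<le> r j \<and> r j \<le> q j + 1"
      and t: "\<forall>j<s. q j \<le> t j \<and> t j \<le> q j + 1" and lt: "lab r i \<noteq> lab t i"
      using cell i(1) by blast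
    obtain a b where a: "\<forall>j<s. q j \<le> a j \<and> a j \<le> q j + 1" "lab a i = 0"
      and b: "\<forall>j<s. q j \<le> b j \<and> b j \<le> q j + 1" "lab b i = 1"
    proof (cases "lab r i = 0")
      case True
      then have "lab t i = 1" using lt by (simp add: lab_def split: if_splits)
      then show ?thesis using that r t True by blast
    next
      case False
      then have "lab r i = 1" by (simp add: lab_def split: if_splits)
      moreover have "lab t i = 0" using lt \<open>lab r i = 1\<close> by (simp add: lab_def split: if_splits)
      ultimately show ?thesis using that r t by blast
    qed
    have Kp: "real K > 0" using K_pos by simp
    have ptq: "pt q j = real (q i) / real K" unfolding pt_def i_def by simp
    have lo: "real (q i) / real K \<le> F j (pt a)"
    proof -
      have "real (a i) \<le> real K * F j (pt a)" using a(2) i(2) unfolding lab_def by (auto split: if_splits)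
      moreover have "q i \<le> a i" using a(1) i(1) by auto
      ultimately have "real (q i) \<le> real K * F j (pt a)" by linarith
      then show ?thesis using Kp by (simp add: divide_le_eq mult.commute)
    qed
    have hi: "F j (pt b) \<le> (real (q i) + 1) / real K"
    proof -
      have "real K * F j (pt b) \<le> real (b i)"
      proof (cases "b i < P")
        case True
        then show ?thesis using b(2) i(2) unfolding lab_def by (auto split: if_splits)
      next
        case False
        have "real K * F j (pt b) \<le> real K * real n" using F_le[OF j] Kp by simp
        also have "\<dots> = real P" unfolding P_def by simp
        finally show ?thesis using False by linarith
      qed
      moreover have "b i \<le> q i + 1" using b(1) i(1) by auto
      ultimately have "real K * F j (pt b) \<le> real (q i) + 1" by linarith
      then show ?thesis using Kp by (simp add: le_divide_eq mult.commute)
    qed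
    have "1 / real K \<le> 1" using K_pos by simp
    then have "(real (q i) + 1) / real K \<le> pt q j + 1" unfolding ptq by (simp add: add_divide_distrib)
    then show ?thesis using F_cell[OF a(1) j] F_cell[OF b(1) j] lo hi ptq by (simp add: abs_le_iff)
  qed
  then show ?thesis by blast
qed

end


lemma card_filter_real:
  "finite A \<Longrightarrow> real (card {x\<in>A. P x}) = (\<Sum>x\<in>A. if P x then 1 else 0)"
proof -
  assume "finite A"
  have "real (card {x\<in>A. P x}) = (\<Sum>x\<in>{x\<in>A. P x}. 1)" by simp
  also have "\<dots> = (\<Sum>x\<in>A. if P x then 1 else 0)" using \<open>finite A\<close> by (rule sum.inter_filter)
  finally show ?thesis .
qed

lemma l1_bal:
  fixes a b :: "nat \<Rightarrow> real"
  assumes "\<forall>j\<in>J. a j \<le> b j + 1" "sum a J = sum b J" "finite J"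
  shows "(\<Sum>j\<in>J. \<bar>a j - b j\<bar>) \<le> 2 * real (card J)"
proof -
  have "(\<Sum>j\<in>J. \<bar>a j - b j\<bar>) = (\<Sum>j\<in>J. 2 * max 0 (a j - b j) - (a j - b j))"
    by (rule sum.cong) (auto simp: max_def)
  also have "\<dots> = (\<Sum>j\<in>J. 2 * max 0 (a j - b j)) - (sum a J - sum b J)"
    by (simp add: sum_subtractf)
  also have "\<dots> \<le> (\<Sum>j\<in>J. 2)"
  proof -
    have "(\<Sum>j\<in>J. 2 * max 0 (a j - b j)) \<le> (\<Sum>j\<in>J. 2)"
      by (rule sum_mono) (use assms(1) in auto)
    then show ?thesis using assms(2) by linarith
  qed
  finally show ?thesis by simp
qed

context G begin

lemma main: "\<exists>S. approx_pure_NE n s u (10 * real s ^ 2 * lam) S"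
proof -
  obtain x where fp: "\<forall>j\<in>{1..s}. \<bar>F j x - x j\<bar> \<le> 2" using approx_fp by blast
  define A where "A p = {j\<in>{1..s}. sg p j x > 0}" for p
  define c where "c j = nat \<lceil>F j x\<rceil>" for j
  have cF: "F j x \<le> real (c j)" for j unfolding c_def by (rule real_nat_ceiling_ge)
  have hall: "\<forall>T\<subseteq>{1..n}. card T \<le> (\<Sum>j\<in>\<Union>(A ` T). c j)"
  proof (intro allI impI)
    fix T assume T: "T \<subseteq> {1..n}"
    define NT where "NT = \<Union>(A ` T)"
    have NTs: "NT \<subseteq> {1..s}" unfolding NT_def A_def by auto
    have finT: "finite T" using T finite_subset by blast
    have "real (card T) = (\<Sum>p\<in>T. (\<Sum>j=1..s. sg p j x))" by (simp only: sg_sum) simp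
    also have "\<dots> = (\<Sum>p\<in>T. (\<Sum>j\<in>NT. sg p j x))"
    proof (rule sum.cong[OF refl])
      fix p assume pT: "p \<in> T"
      show "(\<Sum>j=1..s. sg p j x) = (\<Sum>j\<in>NT. sg p j x)"
      proof (rule sum.mono_neutral_right)
        show "finite {1..s}" by simp
        show "NT \<subseteq> {1..s}" by (rule NTs)
        show "\<forall>j\<in>{1..s} - NT. sg p j x = 0"
        proof
          fix j assume "j \<in> {1..s} - NT"
          then have "\<not> sg p j x > 0" using pT unfolding NT_def A_def by auto
          then show "sg p j x = 0" using sg_nonneg[of p j x] by simp
        qed
      qed
    qed
    also have "\<dots> = (\<Sum>j\<in>NT. (\<Sum>p\<in>T. sg p j x))" by (rule sum.swap)
    also have "\<dots> \<le> (\<Sum>j\<in>NT. F j x)"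
      unfolding F_def
    proof (rule sum_mono)
      fix j show "(\<Sum>p\<in>T. sg p j x) \<le> (\<Sum>p = 1..n. sg p j x)"
        using T by (intro sum_mono2) (auto simp: sg_nonneg)
    qed
    also have "\<dots> \<le> (\<Sum>j\<in>NT. real (c j))" by (rule sum_mono) (rule cF)
    finally have "real (card T) \<le> real (\<Sum>j\<in>NT. c j)" by simp
    then show "card T \<le> (\<Sum>j\<in>\<Union>(A ` T). c j)" unfolding NT_def by linarith
  qed
  obtain S where SA: "\<forall>p\<in>{1..n}. S p \<in> A p" and Sc: "\<forall>j. card {p\<in>{1..n}. S p = j} \<le> c j"
    using hall_cap[of "{1..n}" A c] hall unfolding A_def by auto
  have Ss: "S p \<in> {1..s}" and Spos: "sg p (S p) x > 0" if "p \<in> {1..n}" for p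
    using SA that unfolding A_def by auto
  define cnt where "cnt j = card {p\<in>{1..n}. S p = j}" for j
  have cnt_real: "real (cnt j) = (\<Sum>p=1..n. if j = S p then 1 else 0)" for j
    unfolding cnt_def by (subst card_filter_real) (auto intro: sum.cong)
  have cnt_sum: "(\<Sum>j=1..s. real (cnt j)) = real n"
  proof -
    have "(\<Sum>j=1..s. real (cnt j)) = (\<Sum>p=1..n. \<Sum>j=1..s. if j = S p then 1 else 0)"
      unfolding cnt_real by (rule sum.swap)
    also have "\<dots> = (\<Sum>p=1..n. 1)"
      by (rule sum.cong[OF refl]) (use Ss in \<open>simp add: sum.delta\<close>)
    finally show ?thesis by simp
  qed
  have cnt_le: "real (cnt j) \<le> F j x + 1" for j
  proof -
    have "real (cnt j) \<le> real (c j)" using Sc unfolding cnt_def by simp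
    also have "\<dots> \<le> F j x + 1" unfolding c_def
      using F_nonneg[of j x] of_int_ceiling_le_add_one[of "F j x"] by simp
    finally show ?thesis .
  qed
  define cv where "cv = (\<lambda>j. real (cnt j))"
  define Fv where "Fv = (\<lambda>j. F j x)"
  have d1: "D cv Fv \<le> 2 * real s"
    unfolding D_def cv_def Fv_def
    using l1_bal[of "{1..s}" "\<lambda>j. real (cnt j)" "\<lambda>j. F j x"] cnt_le cnt_sum F_sum[of x] by simp
  have d2: "D Fv x \<le> 2 * real s"
  proof -
    have "D Fv x \<le> (\<Sum>i=1..s. 2)" unfolding D_def Fv_def by (rule sum_mono) (use fp in auto)
    then show ?thesis by simp
  qed
  have dcx: "D cv x \<le> 4 * real s" using D_tri[of cv x Fv] d1 d2 by simp
  have NE: "u p (S p) (others_count n s S p) + 10 * real s ^ 2 * lam \<ge> u p i (others_count n s S p)"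
    if p: "p \<in> {1..n}" and i: "i \<in> {1..s}" for p i
  proof -
    define o' where "o' = others_count n s S p"
    have oj: "real (o' j) = real (cnt j) - (if j = S p then 1 else 0)" if "j \<in> {1..s}" for j
    proof -
      have "{q \<in> {1..n} - {p}. S q = j} = {q\<in>{1..n}. S q = j} - {p}" by auto
      then have "o' j = card ({q\<in>{1..n}. S q = j} - {p})"
        unfolding o'_def others_count_def using that by simp
      also have "\<dots> = cnt j - (if j = S p then 1 else 0)"
        unfolding cnt_def using p by (simp add: card_Diff_singleton_if)
      finally have oe: "o' j = cnt j - (if j = S p then 1 else 0)" .
      have "cnt (S p) \<ge> 1"
      proof -
        have "p \<in> {q\<in>{1..n}. S q = S p}" using p by simp
        then have "{q\<in>{1..n}. S q = S p} \<noteq> {}" by blast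
        then show ?thesis unfolding cnt_def by (simp add: Suc_leI card_gt_0_iff)
      qed
      then show ?thesis unfolding oe by (cases "j = S p") (auto simp: of_nat_diff)
    qed
    have o_Pi: "o' \<in> Pi_set s (n - 1)"
    proof -
      have "(\<Sum>j=1..s. real (o' j)) = (\<Sum>j=1..s. real (cnt j)) - (\<Sum>j=1..s. if j = S p then 1 else 0)"
        by (simp add: oj sum_subtractf)
      also have "\<dots> = real n - 1" using cnt_sum Ss[OF p] by (simp add: sum.delta)
      finally have "real (\<Sum>j=1..s. o' j) = real (n - 1)" using n2 by simp
      then have "(\<Sum>j=1..s. o' j) = n - 1" by (simp only: of_nat_eq_iff)
      then show ?thesis unfolding Pi_set_def o'_def others_count_def by auto
    qed
    have dox: "D (rv o') x \<le> 4 * real s + 1"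
    proof -
      have "D (rv o') cv = (\<Sum>j=1..s. if j = S p then 1 else 0)"
        unfolding D_def rv_def cv_def by (rule sum.cong[OF refl]) (simp add: oj)
      also have "\<dots> = 1" using Ss[OF p] by (simp add: sum.delta)
      finally show ?thesis using D_tri[of "rv o'" x cv] dcx by simp
    qed
    have e1: "u p (S p) o' \<ge> E p (S p) x - lam * (4 * real s + 1)"
    proof -
      have "E p (S p) x \<le> E p (S p) (rv o') + lam * D x (rv o')" by (rule E_lip[OF p Ss[OF p]])
      moreover have "lam * D x (rv o') \<le> lam * (4 * real s + 1)"
        using dox D_sym[of x "rv o'"] lam by (simp add: mult_left_mono)
      ultimately show ?thesis using E_int[OF p Ss[OF p] o_Pi] by simp
    qed
    have e2: "E p (S p) x > E p i x - lam"
      using sg_pos_best[OF Spos[OF p]] M_ge[OF i, of p x] by simp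
    have e3: "E p i x \<ge> u p i o' - lam * (4 * real s + 1)"
    proof -
      have "E p i (rv o') \<le> E p i x + lam * D (rv o') x" by (rule E_lip[OF p i])
      moreover have "lam * D (rv o') x \<le> lam * (4 * real s + 1)"
        using dox lam by (simp add: mult_left_mono)
      ultimately show ?thesis using E_int[OF p i o_Pi] by simp
    qed
    have "lam * (8 * real s + 3) \<le> 10 * real s ^ 2 * lam"
    proof -
      have "8 * real s + 3 \<le> 10 * real s ^ 2"
      proof -
        have "real s \<ge> 2" using s2 by simp
        moreover have "real s * real s \<ge> 2 * real s" using \<open>real s \<ge> 2\<close> by (simp add: mult_right_mono)
        ultimately have "8 * real s + 3 \<le> 10 * (real s * real s)" by linarith
        then show ?thesis by (simp add: power2_eq_square)
      qed
      then show ?thesis using lam by (simp add: mult_left_mono mult.commute)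
    qed
    then show ?thesis using e1 e2 e3 unfolding o'_def by (simp add: algebra_simps)
  qed
  show ?thesis
    unfolding approx_pure_NE_def pure_profile_def using Ss NE by blast
qed

end

theorem theorem1:
  shows "\<exists>C::real. C > 0 \<and>
    (\<forall>(n::nat) (s::nat) (u :: nat \<Rightarrow> nat \<Rightarrow> (nat \<Rightarrow> nat) \<Rightarrow> real) (lambda::real).
       n \<ge> 2 \<longrightarrow> s \<ge> 2 \<longrightarrow> lambda > 0 \<longrightarrow> anonymous_game n s u \<longrightarrow> lipschitz_game n s u lambda \<longrightarrow>
       (\<exists>S. approx_pure_NE n s u (C * real s ^ 2 * lambda) S))"
proof (intro exI[of _ 10] conjI allI impI)
  fix n s :: nat and u :: "nat \<Rightarrow> nat \<Rightarrow> (nat \<Rightarrow> nat) \<Rightarrow> real" and lambda :: real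
  assume "n \<ge> 2" "s \<ge> 2" "lambda > 0" "anonymous_game n s u" "lipschitz_game n s u lambda"
  then interpret G n s u lambda by unfold_locales
  show "\<exists>S. approx_pure_NE n s u (10 * real s ^ 2 * lambda) S" by (rule main)
qed simp


end
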